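(* Let $\psi=13/10$, $\chi=1/2$, and $f(r)=\frac{\psi-r^{\chi}}{1+r}$ for $r\in(0,1]$. Parameterize $r$ by $t$ via $e^{t}=\frac{r}{1+r}$ (so $t\in(-\infty,\ln(1/2)]$). Then $f$, viewed as a function of $t$, i.e. $t\mapsto f\big(\frac{e^t}{1-e^t}\big)$, is concave on $(-\infty,\ln(1/2)]$. *)

theory Defs
  imports "HOL-Analysis.Analysis"
begin

definition psi :: real where "psi = 13/10"
definition chi :: real where "chi = 1/2"

definition f25 :: "real \<Rightarrow> real" where
  "f25 r = (psi - r powr chi) / (1 + r)"

end

theory Submission
  imports Defs
begin

lemma h: fixes S E :: real assumes "S * S + E * E = E"
  shows "S * (S * (S * (E * (E * 16)))) + (S * (S * (S * (S * (S * (E * (E * 64)))))) + S * (S * (S * (E * (E * (E * (E * 64))))))) =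
        S * (S * (S * (S * (S * (E * 16))))) + S * (S * (S * (E * (E * (E * 80)))))"
proof -
  have "S*S = E - E*E" using assms by simp
  then have s5: "S * (S * (S * (S * (S * X)))) = (E - E*E) * (S*(S*(S*X)))" for X
    by (metis mult.assoc mult.commute)
  show ?thesis by (simp only: s5) (simp add: algebra_simps)
qed

definition G :: "real \<Rightarrow> real" where
 "G t = psi - psi * exp t - sqrt (exp t - exp t ^ 2)"
definition G1 :: "real \<Rightarrow> real" where
 "G1 t = - psi * exp t - exp t * (1 - 2 * exp t) / (2 * sqrt (exp t - exp t ^ 2))"
definition G2 :: "real \<Rightarrow> real" where
 "G2 t = - psi * exp t - exp t ^ 2 * (1 - 6 * exp t + 4 * exp t ^ 2) / (4 * sqrt (exp t - exp t ^ 2) ^ 3)"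

lemma dS: "exp t - exp t ^ 2 > 0 \<Longrightarrow> ((\<lambda>t. sqrt (exp t - exp t ^ 2)) has_real_derivative
      inverse (sqrt (exp t - exp t ^ 2)) * (exp t - 2 * exp t * exp t) / 2) (at t)"
proof -
  assume p: "exp t - exp t ^ 2 > 0"
  have 1: "((\<lambda>t. exp t - exp t ^ 2) has_real_derivative (exp t - 2 * exp t * exp t)) (at t)"
    by (auto intro!: derivative_eq_intros)
  show ?thesis
    using DERIV_chain2[OF DERIV_real_sqrt[OF p] 1] by simp
qed

lemma d1: "exp t - exp t ^ 2 > 0 \<Longrightarrow> DERIV G t :> G1 t"
proof -
  assume p: "exp t - exp t ^ 2 > 0"
  have 3: "(G has_real_derivative (0 - psi * exp t - inverse (sqrt (exp t - exp t ^ 2)) * (exp t - 2 * exp t * exp t) / 2)) (at t)"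
    unfolding G_def[abs_def] by (intro DERIV_diff dS[OF p] DERIV_cmult DERIV_exp DERIV_const)
  show ?thesis using 3 unfolding G1_def by (simp add: field_simps)
qed

lemma d2: "exp t - exp t ^ 2 > 0 \<Longrightarrow> DERIV G1 t :> G2 t"
proof -
  assume p: "exp t - exp t ^ 2 > 0"
  define S where "S = sqrt (exp t - exp t ^ 2)"
  have S: "S > 0" "S^2 = exp t - exp t ^ 2" using p by (auto simp: S_def)
  have n: "((\<lambda>t. exp t * (1 - 2 * exp t)) has_real_derivative (exp t - 4 * exp t * exp t)) (at t)"
    by (auto intro!: derivative_eq_intros simp: algebra_simps)
  have dd: "((\<lambda>t. 2 * sqrt (exp t - exp t ^ 2)) has_real_derivative 2 * (inverse S * (exp t - 2 * exp t * exp t) / 2)) (at t)"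
    unfolding S_def by (intro DERIV_cmult dS[OF p])
  have q: "((\<lambda>t. exp t * (1 - 2 * exp t) / (2 * sqrt (exp t - exp t ^ 2))) has_real_derivative
     ((exp t - 4 * exp t * exp t) * (2 * S) - (2 * (inverse S * (exp t - 2 * exp t * exp t) / 2)) * (exp t * (1 - 2 * exp t))) / ((2*S) ^ Suc (Suc 0))) (at t)"
    using DERIV_quotient[OF n dd] S unfolding S_def by simp
  have 3: "(G1 has_real_derivative (- psi * exp t - ((exp t - 4 * exp t * exp t) * (2 * S) - (2 * (inverse S * (exp t - 2 * exp t * exp t) / 2)) * (exp t * (1 - 2 * exp t))) / ((2*S) ^ Suc (Suc 0)))) (at t)"
    unfolding G1_def[abs_def] by (intro DERIV_diff q DERIV_cmult DERIV_exp DERIV_const DERIV_minus)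
  have e: "- psi * exp t - ((exp t - 4 * exp t * exp t) * (2 * S) - (2 * (inverse S * (exp t - 2 * exp t * exp t) / 2)) * (exp t * (1 - 2 * exp t))) / ((2*S) ^ Suc (Suc 0)) = G2 t"
  proof -
    have "S^3 = S * S^2" by (simp add: power3_eq_cube power2_eq_square)
    then show ?thesis unfolding G2_def S_def[symmetric] using S
      by (simp add: field_simps power2_eq_square power3_eq_cube) (rule h)
  qed
  show ?thesis using 3 e by simp
qed

lemma pos: "(t::real) \<le> ln (1/2) \<Longrightarrow> 0 < exp t \<and> exp t \<le> 1/2 \<and> exp t - exp t ^ 2 > 0"
proof -
  assume "t \<le> ln (1/2)"
  then have "exp t \<le> 1/2" by (metis exp_le_cancel_iff exp_ln zero_less_divide_1_iff zero_less_numeral)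
  moreover have "exp t > 0" by simp
  moreover have "exp t - exp t ^ 2 = exp t * (1 - exp t)" by (simp add: power2_eq_square algebra_simps)
  moreover have "0 < 1 - exp t" using \<open>exp t \<le> 1/2\<close> by linarith
  then have "exp t * (1 - exp t) > 0" by (intro mult_pos_pos) simp_all
  ultimately show ?thesis by simp
qed

lemma g2: "t \<le> ln (1/2) \<Longrightarrow> G2 t \<le> 0"
proof -
  assume a: "t \<le> ln (1/2)"
  note p = pos[OF a]
  define u where "u = exp t"
  define s where "s = sqrt (u - u ^ 2)"
  have u: "0 < u" "u \<le> 1/2" "u - u^2 > 0" using p by (auto simp: u_def)
  have s: "s > 0" "s^2 = u - u ^ 2" using u by (auto simp: s_def)
  define q where "q = 6*u - 4*u^2 - 1"
  have e1: "1 - q = 2 * ((1 - 2*u) * (1 - u))" unfolding q_def by (simp add: power2_eq_square algebra_simps)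
  have "(1 - 2*u) * (1 - u) \<ge> 0" using u by simp
  then have q1: "q \<le> 1" using e1 by linarith
  have e2: "3*u - q = 4 * (u - 3/8)^2 + 7/16" unfolding q_def by (simp add: power2_eq_square algebra_simps)
  have "(u - 3/8)^2 \<ge> 0" by simp
  then have q2: "q \<le> 3 * u" using e2 by linarith
  have key: "u * q \<le> 4 * psi * s^3"
  proof (cases "q \<le> 0")
    case True
    then have "u * q \<le> 0" using u by (simp add: mult_nonneg_nonpos)
    moreover have "4 * psi * s^3 \<ge> 0" using s by (simp add: psi_def)
    ultimately show ?thesis by linarith
  next
    case False
    have "(u*q)^2 = u^2 * q * q" by (simp add: power2_eq_square)
    also have "... \<le> u^2 * q" using False q1 u by (simp add: mult_left_le)
    also have "... \<le> u^2 * (3*u)" using q2 u by (simp add: mult_left_mono)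
    also have "... \<le> 16 * psi^2 * (u - u^2)^3"
    proof -
      have "1 - u \<ge> 1/2" using u by simp
      then have "(1-u)^3 \<ge> (1/2)^3" by (rule power_mono) simp
      then have "u^3 * (1-u)^3 \<ge> u^3 * (1/2)^3" using u by (simp add: mult_left_mono)
      moreover have "(u - u^2)^3 = u^3 * (1-u)^3" by (simp add: power2_eq_square power3_eq_cube algebra_simps)
      moreover have "u^3*(1/2::real)^3 = u^3*(1/8)" by (simp add: power3_eq_cube)
      ultimately have h: "u^3 * (1/8) \<le> (u - u^2)^3" by linarith
      have "u^2 * (3*u) = 3 * u^3" by (simp add: power2_eq_square power3_eq_cube)
      also have "... \<le> 16 * psi^2 * (u^3 * (1/8))" using u by (simp add: psi_def power2_eq_square)
      also have "... \<le> 16 * psi^2 * (u - u^2)^3" using h by (simp add: psi_def)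
      finally show ?thesis .
    qed
    also have "... = (4 * psi * s^3)^2" using s by (simp add: power_mult_distrib power_mult[symmetric] power2_eq_square power3_eq_cube)
    finally show ?thesis by (rule power2_le_imp_le) (use s in \<open>simp add: psi_def\<close>)
  qed
  have "G2 t = - psi * u - u * (u * (1 - 6*u + 4*u^2)) / (4 * s^3)"
    unfolding G2_def u_def s_def by (simp add: power2_eq_square)
  also have "... = - u * (psi - u*q / (4 * s^3))" using s by (simp add: q_def field_simps)
  also have "... \<le> 0" using key s u by (simp add: field_simps)
  finally show ?thesis .
qed

lemma eqG: "t \<le> ln (1/2) \<Longrightarrow> f25 (exp t / (1 - exp t)) = G t"
proof -
  assume a: "t \<le> ln (1/2)"
  note p = pos[OF a]
  define e where "e = exp t"
  have e: "0 < e" "e \<le> 1/2" using p by (auto simp: e_def)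
  have r: "e / (1 - e) > 0" using e by simp
  have "(e / (1 - e)) powr chi = sqrt (e / (1 - e))" using r by (simp add: chi_def powr_half_sqrt)
  moreover have "sqrt (e / (1 - e)) * (1 - e) = sqrt (e - e^2)"
  proof -
    have "sqrt ((1-e)^2) = 1 - e" using e by simp
    then have "sqrt (e / (1 - e)) * (1 - e) = sqrt (e / (1 - e)) * sqrt ((1-e)^2)" by simp
    also have "... = sqrt (e / (1 - e) * (1-e)^2)" by (rule real_sqrt_mult[symmetric])
    also have "e / (1 - e) * (1-e)^2 = e - e^2" using e by (simp add: power2_eq_square field_simps)
    finally show ?thesis .
  qed
  moreover have "1 + e / (1 - e) = 1 / (1 - e)" using e by (simp add: field_simps)
  ultimately have "f25 (e / (1 - e)) = (psi - sqrt (e / (1 - e))) * (1 - e)"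
    unfolding f25_def by simp
  also have "... = G t" unfolding G_def e_def[symmetric]
    using \<open>sqrt (e / (1 - e)) * (1 - e) = sqrt (e - e^2)\<close> by (simp add: algebra_simps)
  finally show ?thesis unfolding e_def .
qed

theorem lemma25:
  shows "concave_on {..ln (1/2)} (\<lambda>t::real. f25 (exp t / (1 - exp t)))"
proof -
  have c: "concave_on {..ln (1/2)} G"
    by (rule f''_le0_imp_concave[where f'=G1 and f''=G2]) (auto intro: d1 d2 g2 dest: pos)
  have ci: "\<forall>x\<in>{..ln (1/2::real)}. \<forall>y\<in>{..ln (1/2)}. \<forall>u\<ge>0. \<forall>v\<ge>0. u + v = 1 \<longrightarrow> G (u *\<^sub>R x + v *\<^sub>R y) \<ge> u * G x + v * G y"
    using c unfolding concave_on_iff by (rule conjunct2)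
  show ?thesis
    unfolding concave_on_iff
  proof (intro conjI ballI allI impI)
    show "convex {..ln (1/2::real)}" by simp
    fix x y u v :: real
    assume x: "x \<in> {..ln (1/2)}" and y: "y \<in> {..ln (1/2)}" and uv: "0 \<le> u" "0 \<le> v" "u + v = 1"
    have xy: "u * x + v * y \<le> ln (1/2)"
      using x y uv convex_bound_le[of x "ln (1/2)" y u v] by simp
    have g: "G (u * x + v * y) \<ge> u * G x + v * G y"
      using ci x y uv by simp
    have fx: "f25 (exp x / (1 - exp x)) = G x" using eqG x by simp
    have fy: "f25 (exp y / (1 - exp y)) = G y" using eqG y by simp
    have fxy: "f25 (exp (u * x + v * y) / (1 - exp (u * x + v * y))) = G (u * x + v * y)" using eqG[OF xy] .
    show "u * f25 (exp x / (1 - exp x)) + v * f25 (exp y / (1 - exp y))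
       \<le> f25 (exp (u *\<^sub>R x + v *\<^sub>R y) / (1 - exp (u *\<^sub>R x + v *\<^sub>R y)))"
      using g unfolding fx fy real_scaleR_def fxy .
  qed
qed

end
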